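(* Let $d\ge2$, $\lambda\ge1$, let $B$ be a magnetic field with bounded derivatives of all orders and $A$ its transversal gauge potential. Then for all $y,x,\xi\in\mathbb{R}^d$ and $1\le j\le d$, $$-i\partial_{y_j}g^{A,\lambda}_{x,\xi}(y)=i\partial_{x_j}g^{A,\lambda}_{x,\xi}(y)-\sum_{k=1}^dB_{jk}(x)\,i\partial_{\xi_k}g^{A,\lambda}_{x,\xi}(y)+\Big[A_j(y)-A_j(x)-r^{(1)}_x\big(A_j(\cdot,x)\big)(y)+r^{(1)}_x\big(A_j(x,\cdot)\big)(y)\Big]g^{A,\lambda}_{x,\xi}(y).$$
   Context: $B=(B_{jk})$, $B_{jk}\in C^\infty(\mathbb{R}^d,\mathbb{R})$, $B_{jk}=-B_{kj}$, $B$ closed, $\sup|\partial^\alpha B_{jk}|\le C_\alpha$. For $x\in\mathbb{R}^d$, $A_j(y,x):=-\sum_{k=1}^d\int_0^1s(y_k-x_k)B_{jk}(x+s(y-x))\,ds$, and $A_j(y):=A_j(y,0)$. $\varphi^A(y,x):=(y-x)\cdot\int_0^1A((1-s)x+sy)\,ds$. $g(y)=(2\pi)^{-d/2}\pi^{-d/4}e^{-|y|^2/2}$, $g^{A,\lambda}_{x,\xi}(y)=\lambda^{d/2}e^{i\xi\cdot(y-x)}g(\lambda(y-x))e^{i\varphi^A(y,x)}$. For a smooth function $f$ of $y$, $r^{(1)}_x(f)(y):=f(y)-f(x)-\nabla f(x)\cdot(y-x)$ is the remainder of the first-order Taylor expansion at $x$; here it is applied to $y\mapsto A_j(y,x)$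 and $y\mapsto A_j(x,y)$. *)

theory Defs
  imports "HOL-Analysis.Analysis"
begin

text \<open>Vectors in R^d are modelled as real^'n, with d = CARD('n).\<close>

definition pdiff :: "'n::finite \<Rightarrow> (real^'n \<Rightarrow> 'a::real_normed_vector) \<Rightarrow> real^'n \<Rightarrow> 'a" where
  "pdiff i f x = vector_derivative (\<lambda>t. f (x + t *\<^sub>R axis i 1)) (at 0)"

text \<open>Iterated partial derivative \<partial>^\<alpha>, multi-index given as a list of coordinates.\<close>
fun pdiffs :: "'n::finite list \<Rightarrow> (real^'n \<Rightarrow> 'a::real_normed_vector) \<Rightarrow> real^'n \<Rightarrow> 'a" where
  "pdiffs [] f = f"
| "pdiffs (i # is) f = pdiff i (pdiffs is f)"

definition smooth_fun :: "(real^'n::finite \<Rightarrow> real) \<Rightarrow> bool" where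
  "smooth_fun f \<longleftrightarrow>
     (\<forall>is. continuous_on UNIV (pdiffs is f) \<and>
           (\<forall>i x. (\<lambda>t. pdiffs is f (x + t *\<^sub>R axis i 1)) differentiable (at 0)))"

definition bounded_derivs :: "(real^'n::finite \<Rightarrow> real) \<Rightarrow> bool" where
  "bounded_derivs f \<longleftrightarrow> (\<forall>is. \<exists>C. \<forall>x. \<bar>pdiffs is f x\<bar> \<le> C)"

definition magnetic_field :: "('n::finite \<Rightarrow> 'n \<Rightarrow> real^'n \<Rightarrow> real) \<Rightarrow> bool" where
  "magnetic_field B \<longleftrightarrow>
     (\<forall>j k. smooth_fun (B j k) \<and> bounded_derivs (B j k)) \<and>
     (\<forall>j k x. B j k x = - B k j x) \<and>
     (\<forall>i j k x. pdiff i (B j k) x + pdiff j (B k i) x + pdiff k (B i j) x = 0)"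

definition gaugeA :: "('n::finite \<Rightarrow> 'n \<Rightarrow> real^'n \<Rightarrow> real) \<Rightarrow> 'n \<Rightarrow> real^'n \<Rightarrow> real^'n \<Rightarrow> real" where
  "gaugeA B j y x = - (\<Sum>k\<in>UNIV. integral {0..1} (\<lambda>s. s * (y$k - x$k) * B j k (x + s *\<^sub>R (y - x))))"

text \<open>\<phi>^A(y,x) = (y-x)\<cdot>\<integral>_0^1 A((1-s)x+sy) ds, with A = A(\<cdot>,0).\<close>
definition phiA :: "('n::finite \<Rightarrow> 'n \<Rightarrow> real^'n \<Rightarrow> real) \<Rightarrow> real^'n \<Rightarrow> real^'n \<Rightarrow> real" where
  "phiA B y x = (y - x) \<bullet> integral {0..1} (\<lambda>s. \<chi> j. gaugeA B j ((1 - s) *\<^sub>R x + s *\<^sub>R y) 0)"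

definition gauss :: "real^'n::finite \<Rightarrow> real" where
  "gauss y = (2 * pi) powr (- real CARD('n) / 2) * pi powr (- real CARD('n) / 4) * exp (- (norm y)\<^sup>2 / 2)"

definition coh :: "('n::finite \<Rightarrow> 'n \<Rightarrow> real^'n \<Rightarrow> real) \<Rightarrow> real \<Rightarrow> real^'n \<Rightarrow> real^'n \<Rightarrow> real^'n \<Rightarrow> complex" where
  "coh B lam x \<xi> y = complex_of_real (lam powr (real CARD('n) / 2)) * exp (\<i> * complex_of_real (\<xi> \<bullet> (y - x)))
      * complex_of_real (gauss (lam *\<^sub>R (y - x))) * exp (\<i> * complex_of_real (phiA B y x))"

definition taylor_rem1 :: "(real^'n::finite \<Rightarrow> real) \<Rightarrow> real^'n \<Rightarrow> real^'n \<Rightarrow> real" where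
  "taylor_rem1 f x y = f y - f x - (\<Sum>i\<in>UNIV. pdiff i f x * (y$i - x$i))"

end

theory Submission
  imports Defs
begin


lemma pdiff_has_deriv_shift:
  fixes f :: "real^'n::finite \<Rightarrow> real"
  assumes dif: "\<And>p. (\<lambda>t. f (p + t *\<^sub>R axis i 1)) differentiable (at 0)"
  shows "((\<lambda>t. f (p + t *\<^sub>R axis i 1)) has_real_derivative pdiff i f (p + tz *\<^sub>R axis i 1)) (at tz)"
proof -
  have "((\<lambda>t. f ((p + tz *\<^sub>R axis i 1) + t *\<^sub>R axis i 1)) has_vector_derivative pdiff i f (p + tz *\<^sub>R axis i 1)) (at 0)"
    using dif[of "p + tz *\<^sub>R axis i 1"] unfolding pdiff_def
    by (simp add: vector_derivative_works)
  then have "((\<lambda>t. f ((p + tz *\<^sub>R axis i 1) + t *\<^sub>R axis i 1)) has_real_derivative pdiff i f (p + tz *\<^sub>R axis i 1)) (at 0)"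
    by (simp add: has_real_derivative_iff_has_vector_derivative)
  then have "((\<lambda>t. f (p + (t + tz) *\<^sub>R axis i 1)) has_real_derivative pdiff i f (p + tz *\<^sub>R axis i 1)) (at 0)"
    by (simp add: algebra_simps scaleR_add_left)
  then show ?thesis using DERIV_shift[of "\<lambda>t. f (p + t *\<^sub>R axis i 1)" _ 0 tz] by simp
qed

lemma C1_has_derivative:
  fixes f :: "real^'n::finite \<Rightarrow> real"
  assumes dif: "\<And>i p. (\<lambda>t. f (p + t *\<^sub>R axis i 1)) differentiable (at 0)"
  and cont: "\<And>i. continuous_on UNIV (pdiff i f)"
  shows "(f has_derivative (\<lambda>h. \<Sum>i\<in>UNIV. h$i * pdiff i f x)) (at x)"
proof -
  have "finite S \<Longrightarrow> ((\<lambda>h. f (x + (\<Sum>i\<in>S. h$i *\<^sub>R axis i 1))) has_derivative (\<lambda>h. \<Sum>i\<in>S. h$i * pdiff i f x)) (at 0)" for S :: "'n set"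
  proof (induction S rule: finite_induct)
    case empty
    then show ?case by simp
  next
    case (insert a S)
    define P where "P = (\<lambda>u::real^'n. \<Sum>i\<in>S. u$i *\<^sub>R axis i (1::real))"
    have Plin: "bounded_linear P" unfolding P_def
      by (intro bounded_linear_sum) (rule bounded_linear_compose[OF bounded_linear_scaleR_left bounded_linear_vec_nth])
    have P0: "P 0 = 0" unfolding P_def by simp
    define g where "g = (\<lambda>(u::real^'n) (t::real). f (x + P u + t *\<^sub>R axis a 1))"
    have fx: "((\<lambda>u. g u 0) has_derivative (\<lambda>h. \<Sum>i\<in>S. h$i * pdiff i f x)) (at 0 within UNIV)"
      using insert.IH unfolding g_def P_def by simp
    have fy: "((\<lambda>t. g u t) has_derivative blinfun_apply (blinfun_scaleR_left (pdiff a f (x + P u + t *\<^sub>R axis a 1)))) (at t within UNIV)" for u t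
      using pdiff_has_deriv_shift[where i=a and p="x + P u" and tz=t, OF dif] unfolding g_def
      by (simp add: has_field_derivative_def mult.commute[of _ "pdiff a f _"])
    have contP: "continuous_on UNIV (\<lambda>(u::real^'n,t::real). x + P u + t *\<^sub>R axis a 1)"
    proof -
      have "continuous_on UNIV (\<lambda>z::((real^'n) \<times> real). P (fst z))"
        by (rule linear_continuous_on[OF bounded_linear_compose[OF Plin bounded_linear_fst]])
      then show ?thesis by (auto intro!: continuous_intros simp: split_beta)
    qed
    have "continuous_on UNIV (\<lambda>(u::real^'n,t::real). blinfun_scaleR_left (pdiff a f (x + P u + t *\<^sub>R axis a 1)))"
    proof -
      have c1: "continuous_on UNIV (\<lambda>z::((real^'n) \<times> real). pdiff a f (x + P (fst z) + snd z *\<^sub>R axis a 1))"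
        using continuous_on_compose2[OF cont[of a] contP] by (simp add: split_beta)
      show ?thesis using continuous_on_compose2[OF linear_continuous_on[OF bounded_linear_blinfun_scaleR_left] c1, of UNIV]
        by (simp add: split_beta)
    qed
    then have fyc: "continuous (at (0, 0) within UNIV \<times> UNIV) (\<lambda>(u,t). blinfun_scaleR_left (pdiff a f (x + P u + t *\<^sub>R axis a 1)))"
      by (simp add: continuous_on_eq_continuous_within)
    have D: "((\<lambda>(u, t). g u t) has_derivative (\<lambda>(tu, tt). (\<Sum>i\<in>S. tu$i * pdiff i f x) + blinfun_scaleR_left (pdiff a f (x + P 0 + 0 *\<^sub>R axis a 1)) tt)) (at (0,0) within UNIV \<times> UNIV)"
      by (rule has_derivative_partialsI[OF fx fy fyc]) auto
    have L: "((\<lambda>h::real^'n. (h, h$a)) has_derivative (\<lambda>h. (h, h$a))) (at 0)"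
      by (intro has_derivative_Pair has_derivative_ident bounded_linear_imp_has_derivative bounded_linear_vec_nth)
    have "((\<lambda>h. (\<lambda>(u, t). g u t) (h, h$a)) has_derivative (\<lambda>h. (\<lambda>(tu, tt). (\<Sum>i\<in>S. tu$i * pdiff i f x) + blinfun_scaleR_left (pdiff a f (x + P 0 + 0 *\<^sub>R axis a 1)) tt) (h, h$a))) (at 0)"
    proof -
      have D': "((\<lambda>(u, t). g u t) has_derivative (\<lambda>(tu, tt). (\<Sum>i\<in>S. tu$i * pdiff i f x) + blinfun_scaleR_left (pdiff a f (x + P 0 + 0 *\<^sub>R axis a 1)) tt)) (at ((\<lambda>h::real^'n. (h, h$a)) 0))"
        using D by simp
      show ?thesis using diff_chain_at[OF L D'] by (simp add: o_def)
    qed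
    then show ?case using insert.hyps unfolding g_def P_def
      by (simp add: add.assoc algebra_simps)
  qed
  note ind = this
  have "((\<lambda>h. f (x + h)) has_derivative (\<lambda>h. \<Sum>i\<in>UNIV. h$i * pdiff i f x)) (at 0)"
  proof -
    have e: "(\<Sum>i\<in>UNIV. h $ i *\<^sub>R axis i (1::real)) = h" for h :: "real^'n"
      using basis_expansion[of h] by (simp add: scalar_mult_eq_scaleR)
    show ?thesis using ind[of UNIV] by (simp only: e) simp
  qed
  then have "((\<lambda>z. f (x + (z - x))) has_derivative (\<lambda>h. \<Sum>i\<in>UNIV. h$i * pdiff i f x)) (at x)"
    using diff_chain_at[of "\<lambda>z. z - x" "\<lambda>h. h" x "\<lambda>h. f (x + h)"]
    by (simp add: o_def has_derivative_diff[OF has_derivative_ident has_derivative_const, simplified])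
  then show ?thesis by simp
qed


lemma C1_line:
  fixes f :: "real^'n::finite \<Rightarrow> real"
  assumes "\<And>x. (f has_derivative (\<lambda>h. \<Sum>i\<in>UNIV. h$i * Df i x)) (at x)"
  shows "((\<lambda>s. f (p + s *\<^sub>R v)) has_real_derivative (\<Sum>i\<in>UNIV. v$i * Df i (p + s *\<^sub>R v))) (at s within S)"
proof -
  have l: "((\<lambda>s. p + s *\<^sub>R v) has_derivative (\<lambda>h. h *\<^sub>R v)) (at s within S)"
    by (auto intro!: derivative_eq_intros)
  have "((\<lambda>s. f (p + s *\<^sub>R v)) has_derivative (\<lambda>h. \<Sum>i\<in>UNIV. (h *\<^sub>R v)$i * Df i (p + s *\<^sub>R v))) (at s within S)"
    using has_derivative_compose[OF l assms] by simp
  moreover have "(\<lambda>h. \<Sum>i\<in>UNIV. (h *\<^sub>R v)$i * Df i (p + s *\<^sub>R v)) = (*) (\<Sum>i\<in>UNIV. v$i * Df i (p + s *\<^sub>R v))"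
    by (rule ext) (simp add: sum_distrib_left mult_ac)
  ultimately show ?thesis by (simp add: has_field_derivative_def)
qed

lemma leib:
  fixes F Ft :: "real \<Rightarrow> real \<Rightarrow> real"
  assumes d: "\<And>t s. ((\<lambda>t. F t s) has_real_derivative Ft t s) (at t)"
    and c1: "continuous_on UNIV (\<lambda>(t,s). Ft t s)" and c2: "continuous_on UNIV (\<lambda>(t,s). F t s)"
  shows "((\<lambda>t. integral {0..1} (F t)) has_real_derivative integral {0..1} (Ft t0)) (at t0)"
proof -
  have i: "F t integrable_on cbox 0 1" for t
  proof -
    have cp: "continuous_on UNIV (\<lambda>s::real. (t, s))" by (intro continuous_intros)
    have "continuous_on UNIV (\<lambda>s. F t s)"
      using continuous_on_compose2[OF c2 cp subset_UNIV] by simp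
    then show ?thesis using continuous_on_subset[OF _ subset_UNIV] integrable_continuous by blast
  qed
  have "((\<lambda>t. integral (cbox 0 1) (F t)) has_real_derivative integral (cbox 0 1) (Ft t0)) (at t0 within UNIV)"
    proof (rule leibniz_rule_field_derivative[where f=F and fx=Ft and U=UNIV and a=0 and b=1])
    show "continuous_on (UNIV \<times> cbox 0 1) (\<lambda>(x, t). Ft x t)" using c1 by (rule continuous_on_subset) simp
  next
    fix x t assume "x \<in> (UNIV::real set)" "t \<in> cbox (0::real) 1"
    show "((\<lambda>x. F x t) has_real_derivative Ft x t) (at x within UNIV)" using d by simp
  next
    show "\<And>x. x \<in> UNIV \<Longrightarrow> F x integrable_on cbox 0 1" using i by simp
  qed auto
  then show ?thesis by simp
qed

lemma int_cont:
  fixes F :: "real \<Rightarrow> real \<Rightarrow> real"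
  assumes c2: "continuous_on UNIV (\<lambda>(t,s). F t s)"
  shows "F t integrable_on {0..1}"
proof -
  have cp: "continuous_on UNIV (\<lambda>s::real. (t, s))" by (intro continuous_intros)
  have "continuous_on UNIV (\<lambda>s. F t s)"
    using continuous_on_compose2[OF c2 cp subset_UNIV] by simp
  then show ?thesis using continuous_on_subset[OF _ subset_UNIV] integrable_continuous_real by blast
qed

abbreviation ax :: "'n::finite \<Rightarrow> real^'n" where "ax i \<equiv> axis i 1"

lemma ax_nth: "(ax l :: real^'n::finite)$m = (if m = l then 1 else 0)"
  by (simp add: axis_def)

lemma if01_mult: "(if P then a else 0) * (y::real) = (if P then a * y else 0)"
  "y * (if P then a else 0) = (if P then y * a else 0)"
  by auto

definition AA :: "('n::finite \<Rightarrow> 'n \<Rightarrow> real^'n \<Rightarrow> real) \<Rightarrow> 'n \<Rightarrow> real^'n \<Rightarrow> real" where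
  "AA B k p = gaugeA B k p 0"

definition DA :: "('n::finite \<Rightarrow> 'n \<Rightarrow> real^'n \<Rightarrow> real) \<Rightarrow> 'n \<Rightarrow> 'n \<Rightarrow> real^'n \<Rightarrow> real" where
  "DA B k l p = - integral {0..1} (\<lambda>s. s * B k l (s *\<^sub>R p) + (\<Sum>m\<in>UNIV. s^2 * p$m * pdiff l (B k m) (s *\<^sub>R p)))"

locale mfield =
  fixes B :: "'n::finite \<Rightarrow> 'n \<Rightarrow> real^'n \<Rightarrow> real"
  assumes mf: "magnetic_field B"
begin

lemma B_cont: "continuous_on UNIV (B j k)"
proof -
  have "continuous_on UNIV (pdiffs [] (B j k))"
    using mf unfolding magnetic_field_def smooth_fun_def by blast
  then show ?thesis by simp
qed

lemma B_dcont: "continuous_on UNIV (pdiff i (B j k))"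
proof -
  have "continuous_on UNIV (pdiffs [i] (B j k))"
    using mf unfolding magnetic_field_def smooth_fun_def by blast
  then show ?thesis by simp
qed

lemma B_ldiff: "(\<lambda>t. B j k (p + t *\<^sub>R ax i)) differentiable (at 0)"
proof -
  have "(\<lambda>t. pdiffs [] (B j k) (p + t *\<^sub>R ax i)) differentiable (at 0)"
    using mf unfolding magnetic_field_def smooth_fun_def by blast
  then show ?thesis by simp
qed

lemma B_deriv: "(B j k has_derivative (\<lambda>h. \<Sum>i\<in>UNIV. h$i * pdiff i (B j k) x)) (at x)"
  by (rule C1_has_derivative[OF B_ldiff B_dcont])

lemma B_antisym: "B j k x = - B k j x"
  using mf unfolding magnetic_field_def by blast

lemma B_closed: "pdiff i (B j k) x + pdiff j (B k i) x + pdiff k (B i j) x = 0"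
  using mf unfolding magnetic_field_def by blast

lemma B_dantisym: "pdiff i (B k j) x = - pdiff i (B j k) x"
proof -
  have e: "B k j = (\<lambda>x. - B j k x)" proof (rule ext)
    fix x show "B k j x = - B j k x" using B_antisym[of j k x] by linarith
  qed
  have "((\<lambda>t. B j k (x + t *\<^sub>R ax i)) has_vector_derivative pdiff i (B j k) x) (at 0)"
    using B_ldiff unfolding pdiff_def by (simp add: vector_derivative_works)
  then have "((\<lambda>t. - B j k (x + t *\<^sub>R ax i)) has_vector_derivative - pdiff i (B j k) x) (at 0)"
    by (rule has_vector_derivative_minus)
  then show ?thesis unfolding e pdiff_def by (simp add: vector_derivative_at)
qed

lemma B_cont'[continuous_intros]: "continuous_on S g \<Longrightarrow> continuous_on S (\<lambda>z. B j k (g z))"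
  by (rule continuous_on_compose2[OF B_cont _ subset_UNIV])

lemma dB_cont'[continuous_intros]: "continuous_on S g \<Longrightarrow> continuous_on S (\<lambda>z. pdiff i (B j k) (g z))"
  by (rule continuous_on_compose2[OF B_dcont _ subset_UNIV])

lemma B_line: "((\<lambda>s. B j k (p + s *\<^sub>R v)) has_real_derivative (\<Sum>i\<in>UNIV. v$i * pdiff i (B j k) (p + s *\<^sub>R v))) (at s within S)"
  by (rule C1_line[OF B_deriv])


lemma AA_int: "AA B k p = - integral {0..1} (\<lambda>s. \<Sum>m\<in>UNIV. s * p$m * B k m (s *\<^sub>R p))"
  unfolding AA_def gaugeA_def
  by (subst integral_sum) (auto intro!: integrable_continuous_real continuous_intros)

lemma AA_line: "((\<lambda>t. AA B k (p + t *\<^sub>R ax l)) has_real_derivative DA B k l p) (at 0)"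
proof -
  define F where "F t s = (\<Sum>m\<in>UNIV. s * (p$m + t * (ax l)$m) * B k m (s *\<^sub>R p + t *\<^sub>R (s *\<^sub>R ax l)))" for t s
  define Ft where "Ft t s = (\<Sum>m\<in>UNIV. s * (ax l)$m * B k m (s *\<^sub>R p + t *\<^sub>R (s *\<^sub>R ax l))
      + s * (p$m + t * (ax l)$m) * (\<Sum>i\<in>UNIV. (s *\<^sub>R ax l)$i * pdiff i (B k m) (s *\<^sub>R p + t *\<^sub>R (s *\<^sub>R ax l))))" for t s
  have eq: "AA B k (p + t *\<^sub>R ax l) = - integral {0..1} (F t)" for t
    unfolding AA_int F_def by (simp add: algebra_simps)
  have d: "((\<lambda>t. F t s) has_real_derivative Ft t s) (at t)" for t s
  proof -
    have dB: "((\<lambda>t. B k m (s *\<^sub>R p + t *\<^sub>R (s *\<^sub>R ax l))) has_real_derivative (\<Sum>i\<in>UNIV. (s *\<^sub>R ax l)$i * pdiff i (B k m) (s *\<^sub>R p + t *\<^sub>R (s *\<^sub>R ax l)))) (at t)" for m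
      by (rule B_line)
    have dl: "((\<lambda>t. s * (p$m + t * (ax l)$m)) has_real_derivative s * (ax l)$m) (at t)" for m
      by (auto intro!: derivative_eq_intros)
    show ?thesis unfolding F_def
      by (rule DERIV_cong[OF DERIV_sum[OF DERIV_mult[OF dl dB]]]) (simp add: Ft_def algebra_simps)
  qed
  have c1: "continuous_on UNIV (\<lambda>(t,s). Ft t s)"
    unfolding Ft_def split_beta by (intro continuous_intros)
  have c2: "continuous_on UNIV (\<lambda>(t,s). F t s)"
    unfolding F_def split_beta by (intro continuous_intros)
  have "((\<lambda>t. - integral {0..1} (F t)) has_real_derivative - integral {0..1} (Ft 0)) (at 0)"
    by (rule DERIV_minus[OF leib[OF d c1 c2]])
  moreover have "integral {0..1} (Ft 0) = integral {0..1} (\<lambda>s. s * B k l (s *\<^sub>R p) + (\<Sum>m\<in>UNIV. s^2 * p$m * pdiff l (B k m) (s *\<^sub>R p)))"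
    unfolding Ft_def
    by (rule integral_cong) (simp only: mult_zero_left scaleR_zero_left add_0_right, simp add: sum.distrib ax_nth if01_mult power2_eq_square mult_ac)
  ultimately show ?thesis unfolding eq DA_def by simp
qed


lemma DA_cont: "continuous_on UNIV (DA B k l)"
proof -
  have "continuous_on UNIV (\<lambda>p. integral (cbox 0 1) (\<lambda>s. s * B k l (s *\<^sub>R p) + (\<Sum>m\<in>UNIV. s^2 * p$m * pdiff l (B k m) (s *\<^sub>R p))))"
    by (rule integral_continuous_on_param) (auto simp: split_beta intro!: continuous_intros)
  then show ?thesis unfolding DA_def[abs_def] by (auto intro!: continuous_intros)
qed

lemma AA_ldiff: "(\<lambda>t. AA B k (p + t *\<^sub>R ax l)) differentiable (at 0)"
  using AA_line unfolding differentiable_def has_field_derivative_def by blast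

lemma pdiff_AA: "pdiff l (AA B k) p = DA B k l p"
  unfolding pdiff_def using AA_line
  by (simp add: vector_derivative_at has_real_derivative_iff_has_vector_derivative)

lemma AA_deriv: "(AA B k has_derivative (\<lambda>h. \<Sum>i\<in>UNIV. h$i * DA B k i x)) (at x)"
proof -
  have c: "continuous_on UNIV (pdiff i (AA B k))" for i
    using DA_cont by (simp add: pdiff_AA[abs_def])
  show ?thesis using C1_has_derivative[OF AA_ldiff c] by (simp add: pdiff_AA)
qed

lemma AA_cont: "continuous_on UNIV (AA B k)"
  using AA_deriv has_derivative_continuous continuous_at_imp_continuous_on by blast

lemma AA_cont'[continuous_intros]: "continuous_on S g \<Longrightarrow> continuous_on S (\<lambda>z. AA B k (g z))"
  by (rule continuous_on_compose2[OF AA_cont _ subset_UNIV])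

lemma DA_cont'[continuous_intros]: "continuous_on S g \<Longrightarrow> continuous_on S (\<lambda>z. DA B k l (g z))"
  by (rule continuous_on_compose2[OF DA_cont _ subset_UNIV])

lemma AA_line_gen: "((\<lambda>s. AA B j (p + s *\<^sub>R v)) has_real_derivative (\<Sum>i\<in>UNIV. v$i * DA B j i (p + s *\<^sub>R v))) (at s within S)"
  by (rule C1_line[OF AA_deriv])

lemma curl: "DA B k l p - DA B l k p = B l k p"
proof -
  have pt: "pdiff k (B l m) x - pdiff l (B k m) x = pdiff m (B l k) x" for m x
    using B_closed[of l k m x] B_dantisym[of k m l x] by linarith
  have dB: "((\<lambda>s. B l k (s *\<^sub>R p)) has_real_derivative (\<Sum>i\<in>UNIV. p$i * pdiff i (B l k) (s *\<^sub>R p))) (at s within S)" for s S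
    using B_line[of l k 0 p s S] by simp
  have "((\<lambda>s. s^2 * B l k (s *\<^sub>R p)) has_real_derivative (2 * s * B l k (s *\<^sub>R p) + s^2 * (\<Sum>m\<in>UNIV. p$m * pdiff m (B l k) (s *\<^sub>R p)))) (at s within S)" for s S
    by (rule DERIV_cong[OF DERIV_mult[OF _ dB]]) (auto intro!: derivative_eq_intros simp: algebra_simps)
  then have ftc: "((\<lambda>s. 2 * s * B l k (s *\<^sub>R p) + s^2 * (\<Sum>m\<in>UNIV. p$m * pdiff m (B l k) (s *\<^sub>R p))) has_integral B l k p) {0..1}"
    using fundamental_theorem_of_calculus[of 0 1 "\<lambda>s. s^2 * B l k (s *\<^sub>R p)"]
    by (simp add: has_real_derivative_iff_has_vector_derivative)
  have "DA B k l p - DA B l k p = integral {0..1} (\<lambda>s. s * B l k (s *\<^sub>R p) + (\<Sum>m\<in>UNIV. s^2 * p$m * pdiff k (B l m) (s *\<^sub>R p)))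
      - integral {0..1} (\<lambda>s. s * B k l (s *\<^sub>R p) + (\<Sum>m\<in>UNIV. s^2 * p$m * pdiff l (B k m) (s *\<^sub>R p)))"
    unfolding DA_def by simp
  also have "\<dots> = integral {0..1} (\<lambda>s. (s * B l k (s *\<^sub>R p) + (\<Sum>m\<in>UNIV. s^2 * p$m * pdiff k (B l m) (s *\<^sub>R p)))
      - (s * B k l (s *\<^sub>R p) + (\<Sum>m\<in>UNIV. s^2 * p$m * pdiff l (B k m) (s *\<^sub>R p))))"
    by (rule integral_diff[symmetric]) (auto intro!: integrable_continuous_real continuous_intros)
  also have "\<dots> = integral {0..1} (\<lambda>s. 2 * s * B l k (s *\<^sub>R p) + s^2 * (\<Sum>m\<in>UNIV. p$m * pdiff m (B l k) (s *\<^sub>R p)))"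
  proof (rule integral_cong)
    fix s :: real
    have "(\<Sum>m\<in>UNIV. s^2 * p$m * pdiff k (B l m) (s *\<^sub>R p)) - (\<Sum>m\<in>UNIV. s^2 * p$m * pdiff l (B k m) (s *\<^sub>R p))
        = (\<Sum>m\<in>UNIV. s^2 * p$m * (pdiff k (B l m) (s *\<^sub>R p) - pdiff l (B k m) (s *\<^sub>R p)))"
      by (simp add: sum_subtractf[symmetric] algebra_simps)
    also have "\<dots> = s^2 * (\<Sum>m\<in>UNIV. p$m * pdiff m (B l k) (s *\<^sub>R p))"
      by (simp add: pt sum_distrib_left mult_ac)
    finally show "(s * B l k (s *\<^sub>R p) + (\<Sum>m\<in>UNIV. s^2 * p$m * pdiff k (B l m) (s *\<^sub>R p)))
      - (s * B k l (s *\<^sub>R p) + (\<Sum>m\<in>UNIV. s^2 * p$m * pdiff l (B k m) (s *\<^sub>R p)))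
      = 2 * s * B l k (s *\<^sub>R p) + s^2 * (\<Sum>m\<in>UNIV. p$m * pdiff m (B l k) (s *\<^sub>R p))"
      using B_antisym[of k l "s *\<^sub>R p"] by (simp add: algebra_simps)
  qed
  also have "\<dots> = B l k p" using ftc by (rule integral_unique)
  finally show ?thesis .
qed

end




lemma refl01: "integral {0..1} (\<lambda>s. f (1 - s)) = integral {0..1} (f :: real \<Rightarrow> real)"
proof -
  have "integral {0..1} (\<lambda>s. f (1 - s)) = integral {(-1)-(-1)..0-(-1)} (\<lambda>s. (\<lambda>x. f (-x)) (s + (-1)))"
    by simp
  also have "\<dots> = integral {-1..0} (\<lambda>x. f (-x))"
    by (rule integral_shift_real_ivl)
  also have "\<dots> = integral {0..1} f"
    using Henstock_Kurzweil_Integration.integral_reflect_real[of 1 0 f] by simp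
  finally show ?thesis .
qed

lemma gauss_line:
  fixes w u :: "real^'n::finite"
  shows "((\<lambda>t. gauss (w + t *\<^sub>R u)) has_real_derivative (- (w \<bullet> u) * gauss w)) (at 0)"
proof -
  define K where "K = (2 * pi) powr (- real CARD('n) / 2) * pi powr (- real CARD('n) / 4)"
  have e: "gauss (w + t *\<^sub>R u) = K * exp (- (w \<bullet> w + 2 * t * (w \<bullet> u) + t^2 * (u \<bullet> u)) / 2)" for t
    unfolding gauss_def K_def power2_norm_eq_inner
    by (simp add:  inner_add_left inner_add_right algebra_simps power2_eq_square inner_commute)
  have g0: "gauss w = K * exp (- (w \<bullet> w) / 2)" using e[of 0] by simp
  show ?thesis unfolding e g0
    by (auto intro!: derivative_eq_intros simp: algebra_simps)
qed

lemma exp_line: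
  assumes "(a has_real_derivative a') (at 0)"
  shows "((\<lambda>t. exp (\<i> * complex_of_real (a t))) has_vector_derivative (\<i> * complex_of_real a' * exp (\<i> * complex_of_real (a 0)))) (at 0)"
proof -
  have "((\<lambda>t. \<i> * complex_of_real (a t)) has_vector_derivative \<i> * complex_of_real a') (at 0)"
    by (rule has_vector_derivative_mult_right[OF has_vector_derivative_of_real[OF assms]])
  from field_vector_diff_chain_at[OF this DERIV_exp] show ?thesis by (simp add: o_def)
qed

lemma coh_prod:
  fixes a g p :: "real \<Rightarrow> real" and c :: complex
  assumes da: "(a has_real_derivative a') (at 0)" and dg: "(g has_real_derivative g') (at 0)"
    and dp: "(p has_real_derivative p') (at 0)"
  shows "((\<lambda>t. c * exp (\<i> * complex_of_real (a t)) * complex_of_real (g t) * exp (\<i> * complex_of_real (p t))) has_vector_derivative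
    (c * exp (\<i> * complex_of_real (a 0)) * exp (\<i> * complex_of_real (p 0)) * (complex_of_real g' + \<i> * complex_of_real (a' + p') * complex_of_real (g 0)))) (at 0)"
  apply (rule has_vector_derivative_eq_rhs)
   apply (rule has_vector_derivative_mult[OF has_vector_derivative_mult[OF has_vector_derivative_mult_right[OF exp_line[OF da]] has_vector_derivative_of_real[OF dg]] exp_line[OF dp]])
  apply (simp add: algebra_simps)
  done

context mfield
begin

lemma gauge_int: "gaugeA B j y x = - integral {0..1} (\<lambda>s. \<Sum>k\<in>UNIV. s * (y$k - x$k) * B j k (x + s *\<^sub>R (y - x)))"
  unfolding gaugeA_def
  by (subst integral_sum) (auto intro!: integrable_continuous_real continuous_intros)

lemma phi_int: "phiA B y x = integral {0..1} (\<lambda>s. \<Sum>k\<in>UNIV. (y-x)$k * AA B k (x + s *\<^sub>R (y - x)))"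
proof -
  have q: "(1 - s) *\<^sub>R x + s *\<^sub>R y = x + s *\<^sub>R (y - x)" for s
    by (simp add: algebra_simps)
  have I: "(integral {0..1} (\<lambda>s. \<chi> j. AA B j (x + s *\<^sub>R (y - x))))$k = integral {0..1} (\<lambda>s. AA B k (x + s *\<^sub>R (y - x)))" for k
    by (subst integral_component_eq_cart[symmetric]) (auto intro!: integrable_continuous_real continuous_intros)
  have f: "(\<lambda>s. \<chi> j. gaugeA B j ((1 - s) *\<^sub>R x + s *\<^sub>R y) 0) = (\<lambda>s. \<chi> j. AA B j (x + s *\<^sub>R (y - x)))"
    by (simp only: AA_def q)
  have "phiA B y x = (\<Sum>k\<in>UNIV. (y-x)$k * integral {0..1} (\<lambda>s. AA B k (x + s *\<^sub>R (y - x))))"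
    unfolding phiA_def f inner_vec_def I by simp
  also have "\<dots> = (\<Sum>k\<in>UNIV. integral {0..1} (\<lambda>s. (y-x)$k * AA B k (x + s *\<^sub>R (y - x))))"
  proof (rule sum.cong[OF refl])
    fix k
    have "(\<lambda>s. AA B k (x + s *\<^sub>R (y - x))) integrable_on {0..1}"
      by (intro integrable_continuous_real continuous_intros)
    then show "(y-x)$k * integral {0..1} (\<lambda>s. AA B k (x + s *\<^sub>R (y - x))) = integral {0..1} (\<lambda>s. (y-x)$k * AA B k (x + s *\<^sub>R (y - x)))"
      by (rule integral_mult)
  qed
  also have "\<dots> = integral {0..1} (\<lambda>s. \<Sum>k\<in>UNIV. (y-x)$k * AA B k (x + s *\<^sub>R (y - x)))"
    by (rule integral_sum[symmetric]) (auto intro!: integrable_continuous_real continuous_intros)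
  finally show ?thesis .
qed

lemma phi_dy: "((\<lambda>t. phiA B (y + t *\<^sub>R ax j) x) has_real_derivative (AA B j y - gaugeA B j y x)) (at 0)"
proof -
  define F where "F t s = (\<Sum>k\<in>UNIV. ((y-x)$k + t * (ax j)$k) * AA B k ((x + s *\<^sub>R (y - x)) + t *\<^sub>R (s *\<^sub>R ax j)))" for t s
  define Ft where "Ft t s = (\<Sum>k\<in>UNIV. (ax j)$k * AA B k ((x + s *\<^sub>R (y - x)) + t *\<^sub>R (s *\<^sub>R ax j))
      + ((y-x)$k + t * (ax j)$k) * (\<Sum>i\<in>UNIV. (s *\<^sub>R ax j)$i * DA B k i ((x + s *\<^sub>R (y - x)) + t *\<^sub>R (s *\<^sub>R ax j))))" for t s
  have eq: "phiA B (y + t *\<^sub>R ax j) x = integral {0..1} (F t)" for t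
    unfolding phi_int F_def by (rule integral_cong) (simp add: algebra_simps)
  have d: "((\<lambda>t. F t s) has_real_derivative Ft t s) (at t)" for t s
  proof -
    have dA: "((\<lambda>t. AA B k ((x + s *\<^sub>R (y - x)) + t *\<^sub>R (s *\<^sub>R ax j))) has_real_derivative (\<Sum>i\<in>UNIV. (s *\<^sub>R ax j)$i * DA B k i ((x + s *\<^sub>R (y - x)) + t *\<^sub>R (s *\<^sub>R ax j)))) (at t)" for k
      by (rule AA_line_gen)
    have dl: "((\<lambda>t. (y-x)$k + t * (ax j)$k) has_real_derivative (ax j)$k) (at t)" for k
      by (auto intro!: derivative_eq_intros)
    show ?thesis unfolding F_def
      by (rule DERIV_cong[OF DERIV_sum[OF DERIV_mult[OF dl dA]]]) (simp add: Ft_def algebra_simps)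
  qed
  have c1: "continuous_on UNIV (\<lambda>(t,s). Ft t s)"
    unfolding Ft_def split_beta by (intro continuous_intros)
  have c2: "continuous_on UNIV (\<lambda>(t,s). F t s)"
    unfolding F_def split_beta by (intro continuous_intros)
  have D: "((\<lambda>t. integral {0..1} (F t)) has_real_derivative integral {0..1} (Ft 0)) (at 0)"
    by (rule leib[OF d c1 c2])
  have dh: "((\<lambda>s. s * AA B j (x + s *\<^sub>R (y - x))) has_real_derivative
      (AA B j (x + s *\<^sub>R (y - x)) + s * (\<Sum>i\<in>UNIV. (y - x)$i * DA B j i (x + s *\<^sub>R (y - x))))) (at s within S)" for s S
    by (rule DERIV_cong[OF DERIV_mult[OF _ AA_line_gen]]) (auto intro!: derivative_eq_intros)
  have ftc: "((\<lambda>s. AA B j (x + s *\<^sub>R (y - x)) + s * (\<Sum>i\<in>UNIV. (y - x)$i * DA B j i (x + s *\<^sub>R (y - x)))) has_integral AA B j y) {0..1}"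
    using fundamental_theorem_of_calculus[of 0 1 "\<lambda>s. s * AA B j (x + s *\<^sub>R (y - x))"] dh
    by (simp add: has_real_derivative_iff_has_vector_derivative)
  have "integral {0..1} (Ft 0) = integral {0..1} (\<lambda>s. (AA B j (x + s *\<^sub>R (y - x)) + s * (\<Sum>i\<in>UNIV. (y - x)$i * DA B j i (x + s *\<^sub>R (y - x))))
      + (\<Sum>k\<in>UNIV. s * (y$k - x$k) * B j k (x + s *\<^sub>R (y - x))))"
  proof (rule integral_cong)
    fix s :: real
    have c: "DA B k j z = DA B j k z + B j k z" for k z using curl[of k j z] by linarith
    define q where "q = x + s *\<^sub>R (y - x)"
    have e1: "(\<Sum>i\<in>UNIV. (s *\<^sub>R ax j)$i * DA B k i z) = s * DA B k j z" for k z
      by (simp add: ax_nth if01_mult)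
    have e2: "(\<Sum>k\<in>UNIV. (ax j)$k * AA B k z) = AA B j z" for z
      by (simp add: ax_nth if01_mult)
    have pk: "(y-x)$k * (s * (DA B j k q + B j k q)) = s * ((y-x)$k * DA B j k q) + s * (y$k - x$k) * B j k q" for k
      by (simp add: algebra_simps)
    have "Ft 0 s = (\<Sum>k\<in>UNIV. (ax j)$k * AA B k q) + (\<Sum>k\<in>UNIV. (y-x)$k * (s * DA B k j q))"
      unfolding Ft_def q_def by (simp only: mult_zero_left scaleR_zero_left add_0_right e1 sum.distrib)
    also have "\<dots> = AA B j q + (\<Sum>k\<in>UNIV. (y-x)$k * (s * (DA B j k q + B j k q)))"
      by (simp only: e2 c)
    also have "\<dots> = AA B j q + (s * (\<Sum>k\<in>UNIV. (y-x)$k * DA B j k q) + (\<Sum>k\<in>UNIV. s * (y$k - x$k) * B j k q))"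
      by (simp only: pk sum.distrib sum_distrib_left)
    finally show "Ft 0 s = (AA B j (x + s *\<^sub>R (y - x)) + s * (\<Sum>i\<in>UNIV. (y - x)$i * DA B j i (x + s *\<^sub>R (y - x))))
      + (\<Sum>k\<in>UNIV. s * (y$k - x$k) * B j k (x + s *\<^sub>R (y - x)))"
      unfolding q_def by simp
  qed
  also have "\<dots> = integral {0..1} (\<lambda>s. AA B j (x + s *\<^sub>R (y - x)) + s * (\<Sum>i\<in>UNIV. (y - x)$i * DA B j i (x + s *\<^sub>R (y - x))))
      + integral {0..1} (\<lambda>s. \<Sum>k\<in>UNIV. s * (y$k - x$k) * B j k (x + s *\<^sub>R (y - x)))"
    by (rule integral_add) (intro integrable_continuous_real continuous_intros)+
  also have "\<dots> = AA B j y - gaugeA B j y x"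
    unfolding gauge_int integral_unique[OF ftc] by simp
  finally show ?thesis using D unfolding eq by simp
qed


lemma phi_antisym: "phiA B y x = - phiA B x y"
proof -
  have "phiA B x y = integral {0..1} (\<lambda>s. (\<lambda>s. \<Sum>k\<in>UNIV. (x-y)$k * AA B k (y + s *\<^sub>R (x - y))) (1 - s))"
    unfolding phi_int by (rule refl01[symmetric])
  also have "\<dots> = integral {0..1} (\<lambda>s. - (\<Sum>k\<in>UNIV. (y-x)$k * AA B k (x + s *\<^sub>R (y - x))))"
  proof (rule integral_cong)
    fix s :: real
    have "y + (1 - s) *\<^sub>R (x - y) = x + s *\<^sub>R (y - x)" by (simp add: algebra_simps)
    moreover have "(x-y)$k = - (y-x)$k" for k by simp
    ultimately show "(\<lambda>s. \<Sum>k\<in>UNIV. (x-y)$k * AA B k (y + s *\<^sub>R (x - y))) (1 - s) = - (\<Sum>k\<in>UNIV. (y-x)$k * AA B k (x + s *\<^sub>R (y - x)))"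
      by (simp add: sum_negf[symmetric] algebra_simps)
  qed
  also have "\<dots> = - phiA B y x" unfolding phi_int by simp
  finally show ?thesis by simp
qed

lemma gauge_diag0: "gaugeA B j x x = 0"
  unfolding gaugeA_def by simp

lemma gauge_diag: "((\<lambda>t. gaugeA B j (x + t *\<^sub>R v) (x + t *\<^sub>R w)) has_real_derivative (- (1/2) * (\<Sum>k\<in>UNIV. (v-w)$k * B j k x))) (at 0)"
proof -
  define C where "C = (\<Sum>k\<in>UNIV. (v-w)$k * B j k x)"
  define F where "F t s = (\<Sum>k\<in>UNIV. (s * (t * (v-w)$k)) * B j k (x + t *\<^sub>R (w + s *\<^sub>R (v - w))))" for t s
  define Ft where "Ft t s = (\<Sum>k\<in>UNIV. (s * (v-w)$k) * B j k (x + t *\<^sub>R (w + s *\<^sub>R (v - w)))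
      + (\<Sum>i\<in>UNIV. (w + s *\<^sub>R (v - w))$i * pdiff i (B j k) (x + t *\<^sub>R (w + s *\<^sub>R (v - w)))) * (s * (t * (v-w)$k)))" for t s
  have eq: "gaugeA B j (x + t *\<^sub>R v) (x + t *\<^sub>R w) = - integral {0..1} (F t)" for t
    unfolding gauge_int F_def by (simp add: algebra_simps)
  have d: "((\<lambda>t. F t s) has_real_derivative Ft t s) (at t)" for t s
  proof -
    have dB: "((\<lambda>t. B j k (x + t *\<^sub>R (w + s *\<^sub>R (v - w)))) has_real_derivative (\<Sum>i\<in>UNIV. (w + s *\<^sub>R (v - w))$i * pdiff i (B j k) (x + t *\<^sub>R (w + s *\<^sub>R (v - w))))) (at t)" for k
      by (rule B_line)
    have dl: "((\<lambda>t. s * (t * (v-w)$k)) has_real_derivative s * (v-w)$k) (at t)" for k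
      by (auto intro!: derivative_eq_intros)
    show ?thesis unfolding F_def Ft_def
      by (rule DERIV_sum[OF DERIV_mult[OF dl dB]])
  qed
  have c1: "continuous_on UNIV (\<lambda>(t,s). Ft t s)"
    unfolding Ft_def split_beta by (intro continuous_intros)
  have c2: "continuous_on UNIV (\<lambda>(t,s). F t s)"
    unfolding F_def split_beta by (intro continuous_intros)
  have D: "((\<lambda>t. - integral {0..1} (F t)) has_real_derivative - integral {0..1} (Ft 0)) (at 0)"
    by (rule DERIV_minus[OF leib[OF d c1 c2]])
  have f0: "Ft 0 s = s * C" for s
    unfolding Ft_def C_def by (simp add: sum_distrib_left mult_ac)
  have "((\<lambda>s. s^2 / 2 * C) has_real_derivative s * C) (at s within S)" for s S
    by (auto intro!: derivative_eq_intros simp: power2_eq_square)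
  then have "((\<lambda>s. s * C) has_integral (1/2 * C)) {0..1}"
    using fundamental_theorem_of_calculus[of 0 1 "\<lambda>s. s^2 / 2 * C" "\<lambda>s. s * C"]
    by (simp add: has_real_derivative_iff_has_vector_derivative)
  then have I: "integral {0..1} (Ft 0) = 1/2 * C" unfolding f0 by (rule integral_unique)
  show ?thesis unfolding eq by (rule DERIV_cong[OF D]) (simp add: I C_def)
qed

lemma pdiff_gauge1: "pdiff l (\<lambda>y'. gaugeA B j y' x) x = - (1/2) * B j l x"
proof -
  have "((\<lambda>t. gaugeA B j (x + t *\<^sub>R ax l) (x + t *\<^sub>R 0)) has_real_derivative (- (1/2) * (\<Sum>k\<in>UNIV. (ax l - 0)$k * B j k x))) (at 0)"
    by (rule gauge_diag)
  then show ?thesis unfolding pdiff_def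
    by (simp add: vector_derivative_at has_real_derivative_iff_has_vector_derivative ax_nth if01_mult)
qed

lemma neg_if0: "- (if P then a else (0::real)) = (if P then - a else 0)" by auto

lemma pdiff_gauge2: "pdiff l (\<lambda>y'. gaugeA B j x y') x = (1/2) * B j l x"
proof -
  have "((\<lambda>t. gaugeA B j (x + t *\<^sub>R 0) (x + t *\<^sub>R ax l)) has_real_derivative (- (1/2) * (\<Sum>k\<in>UNIV. (0 - ax l)$k * B j k x))) (at 0)"
    by (rule gauge_diag)
  then show ?thesis unfolding pdiff_def
    by (simp add: vector_derivative_at has_real_derivative_iff_has_vector_derivative ax_nth if01_mult neg_if0)
qed


lemma coh_dy: "pdiff j (\<lambda>y'. coh B lam x \<xi> y') y =
  complex_of_real (lam powr (real CARD('n) / 2)) * exp (\<i> * complex_of_real (\<xi> \<bullet> (y - x))) * exp (\<i> * complex_of_real (phiA B y x))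
  * (complex_of_real (- (lam^2 * (y-x)$j) * gauss (lam *\<^sub>R (y - x))) + \<i> * complex_of_real (\<xi>$j + (AA B j y - gaugeA B j y x)) * complex_of_real (gauss (lam *\<^sub>R (y - x))))"
proof -
  have ea: "\<xi> \<bullet> (y + t *\<^sub>R ax j - x) = \<xi> \<bullet> (y - x) + t * \<xi>$j" for t
    by (simp add: inner_diff_right inner_add_right inner_axis algebra_simps)
  have da: "((\<lambda>t. \<xi> \<bullet> (y + t *\<^sub>R ax j - x)) has_real_derivative \<xi>$j) (at 0)"
    unfolding ea by (auto intro!: derivative_eq_intros)
  have eg: "lam *\<^sub>R (y + t *\<^sub>R ax j - x) = lam *\<^sub>R (y - x) + t *\<^sub>R (lam *\<^sub>R ax j)" for t
    by (simp add: algebra_simps)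
  have dg: "((\<lambda>t. gauss (lam *\<^sub>R (y + t *\<^sub>R ax j - x))) has_real_derivative (- (lam^2 * (y-x)$j) * gauss (lam *\<^sub>R (y - x)))) (at 0)"
    unfolding eg by (rule DERIV_cong[OF gauss_line]) (simp add: inner_axis power2_eq_square mult_ac)
  show ?thesis unfolding pdiff_def coh_def
    using vector_derivative_at[OF coh_prod[OF da dg phi_dy, of "complex_of_real (lam powr (real CARD('n) / 2))"]]
    by simp
qed

lemma coh_dx: "pdiff j (\<lambda>x'. coh B lam x' \<xi> y) x =
  complex_of_real (lam powr (real CARD('n) / 2)) * exp (\<i> * complex_of_real (\<xi> \<bullet> (y - x))) * exp (\<i> * complex_of_real (phiA B y x))
  * (complex_of_real ((lam^2 * (y-x)$j) * gauss (lam *\<^sub>R (y - x))) + \<i> * complex_of_real (- \<xi>$j + - (AA B j x - gaugeA B j x y)) * complex_of_real (gauss (lam *\<^sub>R (y - x))))"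
proof -
  have ea: "\<xi> \<bullet> (y - (x + t *\<^sub>R ax j)) = \<xi> \<bullet> (y - x) + t * - \<xi>$j" for t
    by (simp add: inner_diff_right inner_add_right inner_axis algebra_simps)
  have da: "((\<lambda>t. \<xi> \<bullet> (y - (x + t *\<^sub>R ax j))) has_real_derivative - \<xi>$j) (at 0)"
    unfolding ea by (auto intro!: derivative_eq_intros)
  have eg: "lam *\<^sub>R (y - (x + t *\<^sub>R ax j)) = lam *\<^sub>R (y - x) + t *\<^sub>R (- (lam *\<^sub>R ax j))" for t
    by (simp add: algebra_simps)
  have dg: "((\<lambda>t. gauss (lam *\<^sub>R (y - (x + t *\<^sub>R ax j)))) has_real_derivative ((lam^2 * (y-x)$j) * gauss (lam *\<^sub>R (y - x)))) (at 0)"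
    unfolding eg by (rule DERIV_cong[OF gauss_line]) (simp add: inner_axis power2_eq_square mult_ac)
  have ep: "phiA B y (x + t *\<^sub>R ax j) = - phiA B (x + t *\<^sub>R ax j) y" for t
    by (rule phi_antisym)
  have dp: "((\<lambda>t. phiA B y (x + t *\<^sub>R ax j)) has_real_derivative - (AA B j x - gaugeA B j x y)) (at 0)"
    unfolding ep by (rule DERIV_minus[OF phi_dy])
  show ?thesis unfolding pdiff_def coh_def
    using vector_derivative_at[OF coh_prod[OF da dg dp, of "complex_of_real (lam powr (real CARD('n) / 2))"]]
    by simp
qed

lemma coh_dxi: "pdiff k (\<lambda>\<xi>'. coh B lam x \<xi>' y) \<xi> =
  complex_of_real (lam powr (real CARD('n) / 2)) * exp (\<i> * complex_of_real (\<xi> \<bullet> (y - x))) * exp (\<i> * complex_of_real (phiA B y x))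
  * (\<i> * complex_of_real ((y-x)$k) * complex_of_real (gauss (lam *\<^sub>R (y - x))))"
proof -
  have ea: "(\<xi> + t *\<^sub>R ax k) \<bullet> (y - x) = \<xi> \<bullet> (y - x) + t * (y-x)$k" for t
    by (simp add: inner_add_left inner_axis' algebra_simps)
  have da: "((\<lambda>t. (\<xi> + t *\<^sub>R ax k) \<bullet> (y - x)) has_real_derivative (y-x)$k) (at 0)"
    unfolding ea by (auto intro!: derivative_eq_intros)
  have dg: "((\<lambda>t. gauss (lam *\<^sub>R (y - x))) has_real_derivative 0) (at 0)" by simp
  have dp: "((\<lambda>t. phiA B y x) has_real_derivative 0) (at 0)" by simp
  show ?thesis unfolding pdiff_def coh_def
    using vector_derivative_at[OF coh_prod[OF da dg dp, of "complex_of_real (lam powr (real CARD('n) / 2))"]]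
    by simp
qed

end


theorem lemma6p1:
  fixes B :: "'n::finite \<Rightarrow> 'n \<Rightarrow> real^'n \<Rightarrow> real"
    and lam :: real and x y \<xi> :: "real^'n" and j :: 'n
  assumes "CARD('n) \<ge> 2"
    and "lam \<ge> 1"
    and "magnetic_field B"
  shows "- \<i> * pdiff j (\<lambda>y'. coh B lam x \<xi> y') y =
           \<i> * pdiff j (\<lambda>x'. coh B lam x' \<xi> y) x
         - (\<Sum>k\<in>UNIV. complex_of_real (B j k x) * \<i> * pdiff k (\<lambda>\<xi>'. coh B lam x \<xi>' y) \<xi>)
         + complex_of_real (gaugeA B j y 0 - gaugeA B j x 0
              - taylor_rem1 (\<lambda>y'. gaugeA B j y' x) x y
              + taylor_rem1 (\<lambda>y'. gaugeA B j x y') x y) * coh B lam x \<xi> y"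
proof -
  interpret mfield B by (rule mfield.intro) (rule assms(3))
  define E where "E = complex_of_real (lam powr (real CARD('n) / 2)) * exp (\<i> * complex_of_real (\<xi> \<bullet> (y - x))) * exp (\<i> * complex_of_real (phiA B y x))"
  define G where "G = gauss (lam *\<^sub>R (y - x))"
  define S where "S = (\<Sum>k\<in>UNIV. B j k x * (y-x)$k)"
  define br where "br = gaugeA B j y 0 - gaugeA B j x 0
              - taylor_rem1 (\<lambda>y'. gaugeA B j y' x) x y
              + taylor_rem1 (\<lambda>y'. gaugeA B j x y') x y"
  have coh: "coh B lam x \<xi> y = E * complex_of_real G"
    unfolding coh_def E_def G_def by (simp add: mult_ac)
  have sum: "(\<Sum>k\<in>UNIV. complex_of_real (B j k x) * \<i> * pdiff k (\<lambda>\<xi>'. coh B lam x \<xi>' y) \<xi>)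
      = - (E * complex_of_real G * complex_of_real S)"
    unfolding coh_dxi E_def[symmetric] G_def[symmetric] S_def
    by (simp add: sum_distrib_left sum_negf[symmetric] algebra_simps)
  have t1: "taylor_rem1 (\<lambda>y'. gaugeA B j y' x) x y = gaugeA B j y x + (1/2) * S"
  proof -
    have h: "(\<Sum>i\<in>UNIV. - (1/2) * B j i x * (y$i - x$i)) = - (1/2) * S"
      unfolding S_def sum_distrib_left by (rule sum.cong) (simp_all add: field_simps)
    show ?thesis unfolding taylor_rem1_def pdiff_gauge1 gauge_diag0 h by simp
  qed
  have t2: "taylor_rem1 (\<lambda>y'. gaugeA B j x y') x y = gaugeA B j x y - (1/2) * S"
  proof -
    have h: "(\<Sum>i\<in>UNIV. (1/2) * B j i x * (y$i - x$i)) = (1/2) * S"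
      unfolding S_def sum_distrib_left by (rule sum.cong) (simp_all add: field_simps)
    show ?thesis unfolding taylor_rem1_def pdiff_gauge2 gauge_diag0 h by simp
  qed
  have R: "AA B j y - gaugeA B j y x = (AA B j x - gaugeA B j x y) + S + br"
    unfolding br_def t1 t2 AA_def by simp
  show ?thesis
    unfolding coh_dy coh_dx sum E_def[symmetric] G_def[symmetric] br_def[symmetric] coh R
    by (simp add: algebra_simps)
qed


end
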